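(* Let $\Lambda_2,\Lambda_3,\Lambda_4\in\mathbb C$ with $\Lambda_4\ne0$, and let $\mathcal V^{[2]}$ be the Virasoro Whittaker module (any central charge) generated by $|J\rangle$ with $L_n|J\rangle=\Lambda_n|J\rangle$ for $n=2,3,4$ and $L_n|J\rangle=0$ for $n>4$. Consider formal power series $|\Psi\rangle=\sum_{k\ge0}\Lambda_5^k|\Psi_k\rangle$ with $|\Psi_0\rangle=|J\rangle$ and $|\Psi_k\rangle\in\mathcal V^{[2]}$ independent of the formal variable $\Lambda_5$, satisfying $L_n|\Psi\rangle=\Lambda_n|\Psi\rangle$ for $n=3,4,5$ and $L_n|\Psi\rangle=0$ for $n>5$. Then: (1) such a vector $|\Psi\rangle$ exists; (2) one can take $|\Psi_k\rangle\in U_{3k}$ for every $k\in\mathbb N$ (in fact this holds for the solution below); (3) $|\Psi\rangle$ is unique under the orthogonal gauge condition $\xi(|\Psi_k\rangle)=\delta_{k,0}$ for all $k\ge0$, and this unique solution satisfies $|\Psi_k\rangle\in U_{3k}$.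
   Context: Basis of $\mathcal V^{[2]}$: $v_\lambda=\mathbf L_{-\lambda}|J\rangle$, $\mathbf L_{-\lambda}=L_{-\lambda_1+2}\cdots L_{-\lambda_\ell+2}$, for partitions $\lambda=(\lambda_1\ge\dots\ge\lambda_\ell\ge1)$, with $v_\emptyset=|J\rangle$. Degree: $\deg v_\lambda=|\lambda|=\sum_i\lambda_i$; $U_m=\operatorname{span}\{v_\lambda:|\lambda|\le m\}$. The linear functional $\xi$ on $\mathcal V^{[2]}$ takes the coefficient of $v_\emptyset=|J\rangle$ in the expansion in the basis $\{v_\lambda\}$. The relations on $|\Psi\rangle$ hold order by order in $\Lambda_5$. *)

theory Defs
  imports Main Complex_Main
begin

definition is_partition :: "nat list \<Rightarrow> bool" where
  "is_partition lam \<longleftrightarrow> (\<forall>a\<in>set lam. 1 \<le> a) \<and> sorted_wrt (\<ge>) lam"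

definition vbasis :: "(int \<Rightarrow> 'v \<Rightarrow> 'v) \<Rightarrow> 'v \<Rightarrow> nat list \<Rightarrow> 'v" where
  "vbasis L J lam = foldr (\<lambda>a w. L (2 - int a) w) lam J"

definition Ufilt :: "(complex \<Rightarrow> 'v \<Rightarrow> 'v::ab_group_add) \<Rightarrow> (int \<Rightarrow> 'v \<Rightarrow> 'v) \<Rightarrow> 'v \<Rightarrow> nat \<Rightarrow> 'v set" where
  "Ufilt scale L J m = module.span scale (vbasis L J ` {lam. is_partition lam \<and> sum_list lam \<le> m})"

definition xi :: "(complex \<Rightarrow> 'v \<Rightarrow> 'v::ab_group_add) \<Rightarrow> (int \<Rightarrow> 'v \<Rightarrow> 'v) \<Rightarrow> 'v \<Rightarrow> 'v \<Rightarrow> complex" where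
  "xi scale L J x = module.representation scale (vbasis L J ` {lam. is_partition lam}) x J"

definition whittaker2 ::
  "(complex \<Rightarrow> 'v \<Rightarrow> 'v::ab_group_add) \<Rightarrow> (int \<Rightarrow> 'v \<Rightarrow> 'v) \<Rightarrow> complex \<Rightarrow> 'v \<Rightarrow>
   complex \<Rightarrow> complex \<Rightarrow> complex \<Rightarrow> bool" where
  "whittaker2 scale L c J l2 l3 l4 \<longleftrightarrow>
     vector_space scale \<and>
     (\<forall>n. Vector_Spaces.linear scale scale (L n)) \<and>
     (\<forall>m n x. L m (L n x) - L n (L m x) =
        scale (of_int (m - n)) (L (m + n) x) +
        (if m + n = 0 then scale (c / 12 * (of_int m ^ 3 - of_int m)) x else 0)) \<and>
     L 2 J = scale l2 J \<and> L 3 J = scale l3 J \<and> L 4 J = scale l4 J \<and>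
     (\<forall>n>4. L n J = 0) \<and>
     inj_on (vbasis L J) {lam. is_partition lam} \<and>
     module.independent scale (vbasis L J ` {lam. is_partition lam}) \<and>
     module.span scale (vbasis L J ` {lam. is_partition lam}) = UNIV"

text \<open>Psi = sum_k Lambda5^k Psi_k, with Psi_0 = J, solving (order by order in Lambda5)
  L_n Psi = Lambda_n Psi (n = 3,4,5), L_n Psi = 0 (n > 5).\<close>
definition psi_solution ::
  "(complex \<Rightarrow> 'v \<Rightarrow> 'v::ab_group_add) \<Rightarrow> (int \<Rightarrow> 'v \<Rightarrow> 'v) \<Rightarrow> 'v \<Rightarrow>
   complex \<Rightarrow> complex \<Rightarrow> (nat \<Rightarrow> 'v) \<Rightarrow> bool" where
  "psi_solution scale L J l3 l4 Psi \<longleftrightarrow>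
     Psi 0 = J \<and>
     (\<forall>k. L 3 (Psi k) = scale l3 (Psi k)) \<and>
     (\<forall>k. L 4 (Psi k) = scale l4 (Psi k)) \<and>
     L 5 (Psi 0) = 0 \<and> (\<forall>k. L 5 (Psi (Suc k)) = Psi k) \<and>
     (\<forall>n>5. \<forall>k. L n (Psi k) = 0)"

end

theory Submission
  imports Defs "HOL-Library.Multiset"
begin

lemma is_partition_Nil[simp]: "is_partition []"
  by (simp add: is_partition_def)

lemma is_partition_Cons:
  "is_partition (b # l) \<longleftrightarrow> 1 \<le> b \<and> (\<forall>a\<in>set l. a \<le> b) \<and> is_partition l"
  by (auto simp: is_partition_def)

lemma is_partition_sum0: "is_partition l \<Longrightarrow> sum_list l = 0 \<Longrightarrow> l = []"
  by (cases l) (auto simp: is_partition_Cons)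

lemma is_partition_pos: "is_partition l \<Longrightarrow> a \<in> set l \<Longrightarrow> 1 \<le> a"
  by (auto simp: is_partition_def)

lemma is_partition_eq:
  assumes "is_partition l1" "is_partition l2" "mset l1 = mset l2"
  shows "l1 = l2"
proof -
  have s1: "sorted (rev l1)" and s2: "sorted (rev l2)"
    using assms by (auto simp: is_partition_def sorted_wrt_rev)
  have "sort (rev l2) = rev l1"
    by (rule properties_for_sort) (use assms s1 in auto)
  moreover have "sort (rev l2) = rev l2" using s2 by (simp add: sorted_sort_id)
  ultimately show ?thesis by simp
qed

fun ins :: "nat \<Rightarrow> nat list \<Rightarrow> nat list" where
  "ins a [] = [a]"
| "ins a (b # l) = (if b \<le> a then a # b # l else b # ins a l)"

lemma set_ins[simp]: "set (ins a l) = insert a (set l)"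
  by (induction l) auto

lemma sum_ins[simp]: "sum_list (ins a l) = a + sum_list l"
  by (induction l) auto

lemma mset_ins[simp]: "mset (ins a l) = add_mset a (mset l)"
  by (induction l) (auto simp: add_mset_commute)

lemma is_partition_ins: "is_partition l \<Longrightarrow> 1 \<le> a \<Longrightarrow> is_partition (ins a l)"
  by (induction l) (auto simp: is_partition_Cons)

definition canon :: "nat list \<Rightarrow> nat list" where
  "canon w = foldr ins w []"

lemma canon_Cons: "canon (a # w) = ins a (canon w)"
  by (simp add: canon_def)

lemma canon_props: "(\<forall>x\<in>set w. 1 \<le> x) \<Longrightarrow> is_partition (canon w) \<and> sum_list (canon w) = sum_list w"
  by (induction w) (auto simp: canon_Cons is_partition_ins, auto simp add: canon_def)

lemma swap_ins:
  assumes sw: "\<And>u a b z. g (u @ a # b # z) = g (u @ b # a # z)"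
  shows "g (u @ a # l) = g (u @ ins a l)"
proof (induction l arbitrary: u)
  case Nil then show ?case by simp
next
  case (Cons b l)
  show ?case
  proof (cases "b \<le> a")
    case True then show ?thesis by simp
  next
    case False
    have "g (u @ a # b # l) = g (u @ b # a # l)" by (rule sw)
    also have "\<dots> = g ((u @ [b]) @ a # l)" by simp
    also have "\<dots> = g ((u @ [b]) @ ins a l)" by (rule Cons)
    finally show ?thesis using False by simp
  qed
qed

lemma swap_canon:
  assumes sw: "\<And>u a b z. g (u @ a # b # z) = g (u @ b # a # z)"
  shows "g (u @ w) = g (u @ canon w)"
proof (induction w arbitrary: u)
  case Nil then show ?case by (simp add: canon_def)
next
  case (Cons a w)
  have "g (u @ a # w) = g ((u @ [a]) @ w)" by simp
  also have "\<dots> = g ((u @ [a]) @ canon w)" by (rule Cons)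
  also have "\<dots> = g (u @ a # canon w)" by simp
  also have "\<dots> = g (u @ ins a (canon w))" by (rule swap_ins[where g=g, OF sw])
  finally show ?case by (simp add: canon_Cons)
qed

lemma remove1_partition: "is_partition l \<Longrightarrow> is_partition (remove1 j l)"
  by (induction l) (auto simp: is_partition_Cons dest: set_mp[OF set_remove1_subset])

lemma remove1_head: "is_partition l \<Longrightarrow> (\<forall>a\<in>set l. a \<le> j) \<Longrightarrow> j \<in> set l \<Longrightarrow> j # remove1 j l = l"
  by (cases l) (auto simp: is_partition_Cons)

lemma finite_partitions: "finite {l. is_partition l \<and> sum_list l \<le> m}"
proof -
  have "{l. is_partition l \<and> sum_list l \<le> m} \<subseteq> {l. set l \<subseteq> {0..m} \<and> length l \<le> m}"
  proof clarify
    fix l assume p: "is_partition l" and s: "sum_list l \<le> m"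
    have "\<forall>x\<in>set l. x \<le> m" using s member_le_sum_list order_trans by blast
    moreover have "length l \<le> sum_list l"
      using p by (induction l) (auto simp: is_partition_Cons)
    ultimately show "set l \<subseteq> {0..m} \<and> length l \<le> m" using s by auto
  qed
  moreover have "finite {l. set l \<subseteq> {0..m} \<and> length l \<le> m}"
    by (rule finite_lists_length_le) simp
  ultimately show ?thesis by (rule finite_subset)
qed

locale WH =
  fixes scale :: "complex \<Rightarrow> 'v::ab_group_add \<Rightarrow> 'v"
    and L :: "int \<Rightarrow> 'v \<Rightarrow> 'v" and c :: complex and J :: 'v
    and l2 l3 l4 :: complex
  assumes wh: "whittaker2 scale L c J l2 l3 l4" and l4nz: "l4 \<noteq> 0"
begin

lemma vs: "vector_space scale" using wh by (simp add: whittaker2_def)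

sublocale vector_space scale by (rule vs)

definition vb :: "nat list \<Rightarrow> 'v" where "vb l = vbasis L J l"
definition PP :: "nat \<Rightarrow> nat list set" where "PP m = {l. is_partition l \<and> sum_list l \<le> m}"
definition U :: "nat \<Rightarrow> 'v set" where "U m = Ufilt scale L J m"
definition UI :: "int \<Rightarrow> 'v set" where "UI m = (if m < 0 then {0} else U (nat m))"
definition chi :: "int \<Rightarrow> complex" where "chi n = (if n = 3 then l3 else if n = 4 then l4 else 0)"
definition D :: "int \<Rightarrow> 'v \<Rightarrow> 'v" where "D n x = L n x - scale (chi n) x"

fun Dw :: "nat list \<Rightarrow> 'v \<Rightarrow> 'v" where
  "Dw [] x = x"
| "Dw (j # w) x = Dw w (D (int j + 2) x)"

definition lin :: "('v \<Rightarrow> 'v) \<Rightarrow> bool" where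
  "lin f \<longleftrightarrow> (\<forall>x y. f (x + y) = f x + f y) \<and> (\<forall>a x. f (scale a x) = scale a (f x))"

lemma vb_Nil[simp]: "vb [] = J" by (simp add: vb_def vbasis_def)
lemma vb_Cons: "vb (b # l) = L (2 - int b) (vb l)" by (simp add: vb_def vbasis_def)

lemma U_span: "U m = span (vb ` PP m)"
  by (simp add: U_def Ufilt_def PP_def vb_def[abs_def] image_def)

lemma lin_L: "lin (L n)"
proof -
  have "Vector_Spaces.linear scale scale (L n)" using wh by (simp add: whittaker2_def)
  then show ?thesis unfolding lin_def Vector_Spaces.linear_iff by blast
qed

lemma lin_additive: "lin f \<Longrightarrow> additive f"
  by (simp add: lin_def additive_def)

lemma lin_add: "lin f \<Longrightarrow> f (x + y) = f x + f y" by (simp add: lin_def)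
lemma lin_scale: "lin f \<Longrightarrow> f (scale a x) = scale a (f x)" by (simp add: lin_def)
lemma lin_0: "lin f \<Longrightarrow> f 0 = 0" by (rule additive.zero[OF lin_additive])
lemma lin_diff: "lin f \<Longrightarrow> f (x - y) = f x - f y" by (rule additive.diff[OF lin_additive])
lemma lin_sum: "lin f \<Longrightarrow> f (sum g A) = (\<Sum>x\<in>A. f (g x))" by (rule additive.sum[OF lin_additive])

lemma lin_D: "lin (D n)"
  using lin_L[of n] by (simp add: lin_def D_def algebra_simps scale_right_diff_distrib)

lemma lin_comp: "lin f \<Longrightarrow> lin g \<Longrightarrow> lin (\<lambda>x. f (g x))"
  by (simp add: lin_def)

lemma lin_Dw: "lin (Dw w)"
proof (induction w)
  case Nil then show ?case by (simp add: lin_def)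
next
  case (Cons j w)
  have "lin (\<lambda>x. Dw w (D (int j + 2) x))" by (rule lin_comp[OF Cons lin_D])
  then show ?case by (simp add: lin_def)
qed

lemma Dw_append: "Dw (u @ w) x = Dw w (Dw u x)"
  by (induction u arbitrary: x) auto

lemma comm: "L m (L n x) = L n (L m x) + scale (of_int (m - n)) (L (m + n) x) +
   (if m + n = 0 then scale (c / 12 * (of_int m ^ 3 - of_int m)) x else 0)"
proof -
  have "L m (L n x) - L n (L m x) = scale (of_int (m - n)) (L (m + n) x) +
   (if m + n = 0 then scale (c / 12 * (of_int m ^ 3 - of_int m)) x else 0)"
    using wh unfolding whittaker2_def by blast
  then show ?thesis by (simp add: algebra_simps)
qed

lemma LJ2: "L 2 J = scale l2 J" and LJ3: "L 3 J = scale l3 J" and LJ4: "L 4 J = scale l4 J"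
  and LJ5: "n > 4 \<Longrightarrow> L n J = 0"
  using wh unfolding whittaker2_def by auto

lemma inj_vb: "inj_on vb {l. is_partition l}"
  using wh unfolding whittaker2_def vb_def[abs_def] by auto

lemma indep: "independent (vb ` {l. is_partition l})"
  using wh unfolding whittaker2_def vb_def[abs_def] by auto

lemma span_all: "span (vb ` {l. is_partition l}) = UNIV"
  using wh unfolding whittaker2_def vb_def[abs_def] by auto

lemma U_0[simp]: "0 \<in> U m" by (simp add: U_span span_zero)
lemma U_add: "x \<in> U m \<Longrightarrow> y \<in> U m \<Longrightarrow> x + y \<in> U m" by (simp add: U_span span_add)
lemma U_diff: "x \<in> U m \<Longrightarrow> y \<in> U m \<Longrightarrow> x - y \<in> U m" by (simp add: U_span span_diff)
lemma U_scale: "x \<in> U m \<Longrightarrow> scale a x \<in> U m" by (simp add: U_span span_scale)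
lemma U_sum: "(\<And>i. i \<in> A \<Longrightarrow> f i \<in> U m) \<Longrightarrow> sum f A \<in> U m" by (simp add: U_span span_sum)
lemma U_mono: "m \<le> k \<Longrightarrow> U m \<subseteq> U k"
  unfolding U_span by (rule span_mono) (auto simp: PP_def)
lemma U_monoD: "x \<in> U m \<Longrightarrow> m \<le> k \<Longrightarrow> x \<in> U k" using U_mono by blast
lemma vb_U: "is_partition l \<Longrightarrow> sum_list l \<le> m \<Longrightarrow> vb l \<in> U m"
  unfolding U_span by (rule span_base) (auto simp: PP_def)
lemma J_U[simp]: "J \<in> U m" using vb_U[of "[]" m] by simp

lemma UI_0[simp]: "0 \<in> UI m" by (simp add: UI_def)
lemma UI_add: "x \<in> UI m \<Longrightarrow> y \<in> UI m \<Longrightarrow> x + y \<in> UI m" by (auto simp: UI_def U_add split: if_splits)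
lemma UI_diff: "x \<in> UI m \<Longrightarrow> y \<in> UI m \<Longrightarrow> x - y \<in> UI m" by (auto simp: UI_def U_diff split: if_splits)
lemma UI_scale: "x \<in> UI m \<Longrightarrow> scale a x \<in> UI m" by (auto simp: UI_def U_scale split: if_splits)
lemma UI_mono: "x \<in> UI m \<Longrightarrow> m \<le> k \<Longrightarrow> x \<in> UI k"
  by (auto simp: UI_def intro: U_monoD split: if_splits)
lemma UI_U: "UI (int m) = U m" by (simp add: UI_def)
lemma U_UI: "x \<in> U m \<Longrightarrow> int m \<le> k \<Longrightarrow> x \<in> UI k"
  using UI_mono UI_U by blast
lemma UI_neg: "m < 0 \<Longrightarrow> x \<in> UI m \<Longrightarrow> x = 0" by (simp add: UI_def)

lemma lin_map_U:
  assumes f: "lin f" and x: "x \<in> U m" and b: "\<And>l. is_partition l \<Longrightarrow> sum_list l \<le> m \<Longrightarrow> f (vb l) \<in> UI k"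
  shows "f x \<in> UI k"
proof -
  have "x \<in> span (vb ` PP m)" using x by (simp add: U_span)
  then show ?thesis
  proof (induction rule: span_induct_alt)
    case base then show ?case by (simp add: lin_0[OF f])
  next
    case (step a x y)
    then obtain l where "l \<in> PP m" "x = vb l" by auto
    then have "f x \<in> UI k" using b by (auto simp: PP_def)
    then show ?case using step by (simp add: lin_add[OF f] lin_scale[OF f] UI_add UI_scale)
  qed
qed

lemma lin_map_UI:
  assumes f: "lin f" and x: "x \<in> UI m" and b: "\<And>l. is_partition l \<Longrightarrow> int (sum_list l) \<le> m \<Longrightarrow> f (vb l) \<in> UI k"
  shows "f x \<in> UI k"
proof (cases "m < 0")
  case True then show ?thesis using x by (simp add: UI_def lin_0[OF f])
next
  case False
  then have "x \<in> U (nat m)" using x by (simp add: UI_def)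
  then show ?thesis by (rule lin_map_U[OF f]) (use b False in auto)
qed

lemma create_aux:
  "a + sum_list l \<le> t \<Longrightarrow> 1 \<le> a \<Longrightarrow> is_partition l \<Longrightarrow>
   L (2 - int a) (vb l) - vb (ins a l) \<in> U (a + sum_list l - 1)"
proof (induction t arbitrary: a l)
  case 0 then show ?case by simp
next
  case (Suc t)
  have Cr: "L (2 - int a') (vb l') \<in> U (a' + sum_list l')"
    if "a' + sum_list l' \<le> t" "1 \<le> a'" "is_partition l'" for a' l'
  proof -
    have "L (2 - int a') (vb l') - vb (ins a' l') \<in> U (a' + sum_list l')"
      using Suc.IH[OF that] U_monoD by fastforce
    moreover have "vb (ins a' l') \<in> U (a' + sum_list l')"
      by (rule vb_U) (use that is_partition_ins in auto)
    ultimately show ?thesis using U_add by fastforce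
  qed
  have CrU: "L (2 - int a') x \<in> U (m + a')"
    if "x \<in> U m" "m + a' \<le> t" "1 \<le> a'" for a' m x
  proof -
    have "L (2 - int a') x \<in> UI (int (m + a'))"
    proof (rule lin_map_U[OF lin_L that(1)])
      fix l assume "is_partition l" "sum_list l \<le> m"
      then have "L (2 - int a') (vb l) \<in> U (a' + sum_list l)" using Cr that by auto
      then show "L (2 - int a') (vb l) \<in> UI (int (m + a'))"
        by (rule U_UI) (use \<open>sum_list l \<le> m\<close> in simp)
    qed
    then show ?thesis by (simp only: UI_U)
  qed
  show ?case
  proof (cases l)
    case Nil then show ?thesis by (simp add: vb_Cons)
  next
    case (Cons b l')
    have pl': "is_partition l'" and b1: "1 \<le> b" and bl': "\<forall>x\<in>set l'. x \<le> b"
      using Suc.prems Cons by (auto simp: is_partition_Cons)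
    show ?thesis
    proof (cases "b \<le> a")
      case True then show ?thesis using Cons by (simp add: vb_Cons)
    next
      case False
      let ?y = "vb l'"
      let ?T = "a + sum_list l - 1"
      have tot: "a + sum_list l = a + b + sum_list l'" using Cons by simp
      have e: "L (2 - int a) (vb l) = L (2 - int b) (L (2 - int a) ?y) +
          scale (of_int (int b - int a)) (L (4 - int a - int b) ?y) +
          (if 4 - int a - int b = 0 then scale (c / 12 * (of_int (2 - int a) ^ 3 - of_int (2 - int a))) ?y else 0)"
        using comm[of "2 - int a" "2 - int b" ?y] Cons by (simp add: vb_Cons algebra_simps)
      define r where "r = L (2 - int a) ?y - vb (ins a l')"
      have r: "r \<in> U (a + sum_list l' - 1)"
        unfolding r_def by (rule Suc.IH) (use Suc.prems tot b1 pl' in auto)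
      have t1: "L (2 - int b) r \<in> U ?T"
      proof -
        have "a + sum_list l' - 1 + b \<le> t" using Suc.prems tot by simp
        then have "L (2 - int b) r \<in> U (a + sum_list l' - 1 + b)" using CrU[OF r] b1 by blast
        moreover have "a + sum_list l' - 1 + b = ?T" using tot Suc.prems by simp
        ultimately show ?thesis by simp
      qed
      have t1': "L (2 - int b) (L (2 - int a) ?y) = vb (ins a l) + L (2 - int b) r"
        using False Cons by (simp add: r_def lin_diff[OF lin_L] vb_Cons)
      have ab: "4 - int a - int b = 2 - int (a + b - 2)" using False Suc.prems by simp
      have t2: "L (4 - int a - int b) ?y \<in> U ?T"
      proof -
        have "a + b - 2 + sum_list l' \<le> t" "1 \<le> a + b - 2" using Suc.prems tot False by auto
        then have "L (2 - int (a + b - 2)) ?y \<in> U (a + b - 2 + sum_list l')" using Cr pl' by blast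
        moreover have "a + b - 2 + sum_list l' \<le> ?T" using tot Suc.prems by simp
        ultimately show ?thesis unfolding ab by (rule U_monoD)
      qed
      have t3: "?y \<in> U ?T" using vb_U[OF pl'] Suc.prems tot by simp
      have "L (2 - int a) (vb l) - vb (ins a l) = L (2 - int b) r +
          scale (of_int (int b - int a)) (L (4 - int a - int b) ?y) +
          (if 4 - int a - int b = 0 then scale (c / 12 * (of_int (2 - int a) ^ 3 - of_int (2 - int a))) ?y else 0)"
        using e t1' by simp
      also have "\<dots> \<in> U ?T"
        using t1 t2 t3 by (auto intro!: U_add U_scale)
      finally show ?thesis .
    qed
  qed
qed

lemma create: "1 \<le> a \<Longrightarrow> is_partition l \<Longrightarrow> L (2 - int a) (vb l) - vb (ins a l) \<in> U (a + sum_list l - 1)"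
  using create_aux by blast

lemma create_vb: "1 \<le> a \<Longrightarrow> is_partition l \<Longrightarrow> L (2 - int a) (vb l) \<in> U (a + sum_list l)"
proof -
  assume a: "1 \<le> a" and l: "is_partition l"
  have "L (2 - int a) (vb l) - vb (ins a l) \<in> U (a + sum_list l)"
    using create[OF a l] U_monoD by fastforce
  moreover have "vb (ins a l) \<in> U (a + sum_list l)" using vb_U is_partition_ins a l by simp
  ultimately show ?thesis using U_add by fastforce
qed

lemma create_UI: "1 \<le> a \<Longrightarrow> x \<in> UI k \<Longrightarrow> L (2 - int a) x \<in> UI (k + int a)"
  by (rule lin_map_UI[OF lin_L]) (auto intro!: U_UI create_vb)

lemma create_U: "1 \<le> a \<Longrightarrow> x \<in> U m \<Longrightarrow> L (2 - int a) x \<in> U (m + a)"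
  using create_UI[of a x "int m"] by (simp add: UI_U flip: of_nat_add)

end

lemma sum_remove1: "(j::nat) \<in> set l \<Longrightarrow> sum_list (remove1 j l) + j = sum_list l"
  by (induction l) auto

context WH begin

definition SB :: "nat list \<Rightarrow> bool" where
  "SB l \<longleftrightarrow> (\<forall>j\<ge>1. D (int j + 2) (vb l) - scale (of_nat (2*j) * l4 * of_nat (count (mset l) j)) (vb (remove1 j l))
      \<in> UI (int (sum_list l) - int j - 1))"

lemma SB_D:
  assumes l: "is_partition l" and sb: "SB l" and j: "1 \<le> j"
  shows "D (int j + 2) (vb l) \<in> UI (int (sum_list l) - int j)"
proof -
  let ?k = "of_nat (2*j) * l4 * of_nat (count (mset l) j)"
  have r: "D (int j + 2) (vb l) - scale ?k (vb (remove1 j l)) \<in> UI (int (sum_list l) - int j)"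
    using sb j unfolding SB_def by (auto intro: UI_mono)
  have s: "scale ?k (vb (remove1 j l)) \<in> UI (int (sum_list l) - int j)"
  proof (cases "j \<in> set l")
    case True
    have "vb (remove1 j l) \<in> U (sum_list (remove1 j l))"
      by (rule vb_U) (auto simp: remove1_partition l)
    moreover have "int (sum_list (remove1 j l)) = int (sum_list l) - int j"
      using sum_remove1[OF True] by linarith
    ultimately show ?thesis using UI_U UI_scale by metis
  next
    case False
    then have "count (mset l) j = 0" by simp
    then have k0: "?k = 0" by simp
    show ?thesis by (subst k0) simp
  qed
  show ?thesis using UI_add[OF r s] by simp
qed

lemma SB_L3: "is_partition l \<Longrightarrow> SB l \<Longrightarrow> L 3 (vb l) \<in> U (sum_list l)"
proof -
  assume l: "is_partition l" and sb: "SB l"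
  have "D (int 1 + 2) (vb l) \<in> UI (int (sum_list l) - int 1)" by (rule SB_D[OF l sb]) simp
  then have "D 3 (vb l) \<in> U (sum_list l)" by (auto simp: UI_U[symmetric] intro: UI_mono)
  moreover have "L 3 (vb l) = D 3 (vb l) + scale l3 (vb l)" by (simp add: D_def chi_def)
  ultimately show ?thesis using vb_U[OF l order_refl] by (auto intro!: U_add U_scale)
qed

lemma SB_L4: "is_partition l \<Longrightarrow> SB l \<Longrightarrow> L 4 (vb l) \<in> U (sum_list l)"
proof -
  assume l: "is_partition l" and sb: "SB l"
  have "D (int 2 + 2) (vb l) \<in> UI (int (sum_list l) - int 2)" by (rule SB_D[OF l sb]) simp
  then have "D 4 (vb l) \<in> U (sum_list l)" by (auto simp: UI_U[symmetric] intro: UI_mono)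
  moreover have "L 4 (vb l) = D 4 (vb l) + scale l4 (vb l)" by (simp add: D_def chi_def)
  ultimately show ?thesis using vb_U[OF l order_refl] by (auto intro!: U_add U_scale)
qed

lemma SB_L5: "is_partition l \<Longrightarrow> SB l \<Longrightarrow> 5 \<le> n \<Longrightarrow> L n (vb l) \<in> UI (int (sum_list l) - n + 2)"
proof -
  assume l: "is_partition l" and sb: "SB l" and n: "5 \<le> n"
  have "D (int (nat (n - 2)) + 2) (vb l) \<in> UI (int (sum_list l) - int (nat (n - 2)))"
    by (rule SB_D[OF l sb]) (use n in simp)
  moreover have "int (nat (n - 2)) + 2 = n" using n by simp
  moreover have "D n (vb l) = L n (vb l)" using n by (simp add: D_def chi_def)
  ultimately show ?thesis using n by (simp add: algebra_simps)
qed

end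

context WH begin
lemma symbol: "is_partition l \<Longrightarrow> L 2 (vb l) \<in> U (sum_list l) \<and> SB l"
proof (induction l)
  case Nil
  have "L 2 (vb []) \<in> U 0" using LJ2 by (simp add: U_scale)
  moreover have "SB []"
  proof -
    have "D (int j + 2) J = 0" if "1 \<le> j" for j
    proof -
      have "j = 1 \<or> j = 2 \<or> j \<ge> 3" using that by linarith
      then show ?thesis
        by (auto simp: D_def chi_def LJ3 LJ4 LJ5)
    qed
    then show ?thesis by (simp add: SB_def)
  qed
  ultimately show ?case by simp
next
  case (Cons b l')
  have pl': "is_partition l'" and b1: "1 \<le> b" and bl': "\<forall>x\<in>set l'. x \<le> b"
    using Cons.prems by (auto simp: is_partition_Cons)
  have IH2: "L 2 (vb l') \<in> U (sum_list l')" and sb: "SB l'" using Cons.IH pl' by auto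
  let ?y = "vb l'"
  have yU: "?y \<in> U (sum_list l')" by (rule vb_U[OF pl' order_refl])
  have L3: "L 3 ?y \<in> U (sum_list l')" by (rule SB_L3[OF pl' sb])
  have L4: "L 4 ?y \<in> U (sum_list l')" by (rule SB_L4[OF pl' sb])
  have A: "L 2 (vb (b # l')) \<in> U (sum_list (b # l'))"
  proof -
    have e: "L 2 (vb (b # l')) = L (2 - int b) (L 2 ?y) + scale (of_int (2 - (2 - int b))) (L (2 + (2 - int b)) ?y)
       + (if 2 + (2 - int b) = 0 then scale (c / 12 * (of_int 2 ^ 3 - of_int 2)) ?y else 0)"
      using comm[of 2 "2 - int b" ?y] by (simp add: vb_Cons)
    have t1: "L (2 - int b) (L 2 ?y) \<in> U (sum_list (b # l'))"
      using create_U[OF b1 IH2] by (simp add: add.commute)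
    have t2: "L (2 + (2 - int b)) ?y \<in> U (sum_list (b # l'))"
    proof -
      consider "b = 1" | "b = 2" | "b \<ge> 3" using b1 by linarith
      then show ?thesis
      proof cases
        case 1
        have "L 3 ?y \<in> U (sum_list (b # l'))" by (rule U_monoD[OF L3]) simp
        with 1 show ?thesis by simp
      next
        case 2
        have "L 2 ?y \<in> U (sum_list (b # l'))" by (rule U_monoD[OF IH2]) simp
        with 2 show ?thesis by simp
      next
        case 3
        then have e2: "2 + (2 - int b) = 2 - int (b - 2)" by simp
        have "L (2 - int (b - 2)) ?y \<in> U (sum_list l' + (b - 2))"
          by (rule create_U[OF _ yU]) (use 3 in simp)
        then have "L (2 - int (b - 2)) ?y \<in> U (sum_list (b # l'))" by (rule U_monoD) simp
        then show ?thesis by (simp only: e2)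
      qed
    qed
    have t3: "?y \<in> U (sum_list (b # l'))" by (rule U_monoD[OF yU]) simp
    show ?thesis unfolding e using t1 t2 t3 by (auto intro!: U_add U_scale)
  qed
  have B: "SB (b # l')"
    unfolding SB_def
  proof (intro allI impI)
    fix j :: nat assume j1: "1 \<le> j"
    let ?n = "int j + 2" and ?m = "2 - int b"
    let ?k' = "of_nat (2*j) * l4 * of_nat (count (mset l') j)"
    let ?k = "of_nat (2*j) * l4 * of_nat (count (mset (b # l')) j)"
    let ?R = "UI (int (sum_list (b # l')) - int j - 1)"
    define r' where "r' = D ?n ?y - scale ?k' (vb (remove1 j l'))"
    have r': "r' \<in> UI (int (sum_list l') - int j - 1)" using sb j1 unfolding SB_def r'_def by blast
    have Lr': "L ?m r' \<in> ?R"
      using create_UI[OF b1 r'] by (simp add: algebra_simps)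
    define cen where "cen = (if ?n + ?m = 0 then scale (c / 12 * (of_int ?n ^ 3 - of_int ?n)) ?y else 0)"
    have cen: "cen \<in> ?R"
    proof (cases "?n + ?m = 0")
      case True
      then have "int (sum_list l') \<le> int (sum_list (b # l')) - int j - 1" by simp
      then have "?y \<in> ?R" by (rule U_UI[OF yU])
      then show ?thesis using True unfolding cen_def by (simp add: UI_scale)
    next
      case False then show ?thesis by (simp add: cen_def)
    qed
    have eD: "D ?n (vb (b # l')) = L ?m (D ?n ?y) + scale (of_int (?n - ?m)) (L (?n + ?m) ?y) + cen"
    proof -
      have "D ?n (vb (b # l')) = L ?n (L ?m ?y) - scale (chi ?n) (L ?m ?y)" by (simp add: D_def vb_Cons)
      also have "\<dots> = L ?m (L ?n ?y) + scale (of_int (?n - ?m)) (L (?n + ?m) ?y) + cen - L ?m (scale (chi ?n) ?y)"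
        using comm[of ?n ?m ?y] by (simp add: cen_def lin_scale[OF lin_L])
      also have "\<dots> = L ?m (D ?n ?y) + scale (of_int (?n - ?m)) (L (?n + ?m) ?y) + cen"
        by (simp add: D_def lin_diff[OF lin_L] algebra_simps)
      finally show ?thesis .
    qed
    have eDy: "L ?m (D ?n ?y) = scale ?k' (vb (b # remove1 j l')) + L ?m r'"
      by (simp add: r'_def lin_diff[OF lin_L] lin_scale[OF lin_L] vb_Cons)
    show "D ?n (vb (b # l')) - scale ?k (vb (remove1 j (b # l'))) \<in> ?R"
    proof (cases "b = j")
      case True
      have rem: "remove1 j (b # l') = l'" using True by simp
      have cnt: "count (mset (b # l')) j = count (mset l') j + 1" using True by simp
      have h1: "scale ?k' (vb (b # remove1 j l')) = scale ?k' ?y"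
      proof (cases "j \<in> set l'")
        case True
        then show ?thesis using remove1_head[OF pl'] bl' \<open>b = j\<close> by simp
      next
        case False then show ?thesis by (simp add: count_list_0_iff)
      qed
      have nm: "?n + ?m = 4" "?n - ?m = 2 * int j" using True by auto
      have L4e: "L 4 ?y = D 4 ?y + scale l4 ?y" by (simp add: D_def chi_def)
      have D4: "D (int 2 + 2) ?y \<in> UI (int (sum_list l') - int 2)" by (rule SB_D[OF pl' sb]) simp
      have D4R: "D 4 ?y \<in> ?R" by (rule UI_mono[OF D4[simplified]]) (use True in simp)
      have cen0: "cen = 0" using nm by (simp add: cen_def)
      have "D ?n (vb (b # l')) - scale ?k (vb (remove1 j (b # l'))) =
          L ?m r' + scale (of_int (2 * int j)) (D 4 ?y) +
          (scale ?k' ?y + scale (of_int (2 * int j) * l4) ?y - scale ?k ?y)"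
        unfolding eD eDy h1 nm rem L4e cen0
        by (simp add: scale_right_distrib algebra_simps)
      also have "scale ?k' ?y + scale (of_int (2 * int j) * l4) ?y - scale ?k ?y = 0"
      proof -
        have e: "?k = ?k' + of_int (2 * int j) * l4" unfolding cnt by (simp add: algebra_simps)
        show ?thesis unfolding e scale_left_distrib by simp
      qed
      finally show ?thesis using Lr' D4R by (auto intro!: UI_add UI_scale)
    next
      case False
      have rem: "remove1 j (b # l') = b # remove1 j l'" using False by simp
      have cnt: "count (mset (b # l')) j = count (mset l') j" using False by simp
      have T: "L (?n + ?m) ?y \<in> ?R"
      proof -
        consider "b = j + 1" | "b = j + 2" | "b \<ge> j + 3" | "b < j" using False by linarith
        then show ?thesis
        proof cases
          case 1
          then have e3: "?n + ?m = 3" by simp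
          have "L 3 ?y \<in> ?R" by (rule U_UI[OF L3]) (use 1 in simp)
          then show ?thesis by (simp only: e3)
        next
          case 2
          then have e2: "?n + ?m = 2" by simp
          have "L 2 ?y \<in> ?R" by (rule U_UI[OF IH2]) (use 2 in simp)
          then show ?thesis by (simp only: e2)
        next
          case 3
          then have e3: "?n + ?m = 2 - int (b - j - 2)" by simp
          have "L (2 - int (b - j - 2)) ?y \<in> U (sum_list l' + (b - j - 2))"
            by (rule create_U[OF _ yU]) (use 3 in simp)
          then have "L (2 - int (b - j - 2)) ?y \<in> ?R" by (rule U_UI) (use 3 in simp)
          then show ?thesis by (simp only: e3)
        next
          case 4
          have "L (?n + ?m) ?y \<in> UI (int (sum_list l') - (?n + ?m) + 2)"
            by (rule SB_L5[OF pl' sb]) (use 4 in simp)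
          then show ?thesis by (rule UI_mono) (use 4 in simp)
        qed
      qed
      have "D ?n (vb (b # l')) - scale ?k (vb (remove1 j (b # l'))) =
          L ?m r' + scale (of_int (?n - ?m)) (L (?n + ?m) ?y) + cen"
        unfolding eD eDy rem cnt by (simp add: algebra_simps vb_Cons)
      then show ?thesis using Lr' T cen by (auto intro!: UI_add UI_scale)
    qed
  qed
  show ?case using A B by simp
qed

end

context WH begin

abbreviation xiv :: "'v \<Rightarrow> complex" where "xiv \<equiv> xi scale L J"

lemma xi_repr: "xiv x = representation (vb ` {l. is_partition l}) x J"
  by (simp add: xi_def vb_def[abs_def] image_def)

lemma in_span_all: "x \<in> span (vb ` {l. is_partition l})" using span_all by simp

lemma xi_add: "xiv (x + y) = xiv x + xiv y"
  unfolding xi_repr by (simp add: representation_add[OF indep in_span_all in_span_all])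

lemma xi_scale: "xiv (scale a x) = a * xiv x"
  unfolding xi_repr by (simp add: representation_scale[OF indep in_span_all])

lemma xi_0: "xiv 0 = 0"
  unfolding xi_repr by (simp add: representation_zero)

lemma xi_diff: "xiv (x - y) = xiv x - xiv y"
  unfolding xi_repr by (simp add: representation_diff[OF indep in_span_all in_span_all])

lemma xi_sum: "xiv (sum f A) = (\<Sum>i\<in>A. xiv (f i))"
  unfolding xi_repr by (simp add: representation_sum[OF indep in_span_all])

lemma xi_vb: "is_partition l \<Longrightarrow> xiv (vb l) = (if l = [] then 1 else 0)"
proof -
  assume l: "is_partition l"
  have "vb l \<in> vb ` {l. is_partition l}" using l by simp
  then have "xiv (vb l) = (if J = vb l then 1 else 0)"
    unfolding xi_repr by (simp add: representation_basis[OF indep])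
  moreover have "J = vb l \<longleftrightarrow> l = []"
    using inj_vb l by (metis inj_on_def is_partition_Nil mem_Collect_eq vb_Nil)
  ultimately show ?thesis by simp
qed

lemma xi_J: "xiv J = 1" using xi_vb[of "[]"] by simp

lemma PP0: "PP 0 = {[]}"
  by (auto simp: PP_def intro: is_partition_sum0)

lemma U0: "x \<in> U 0 \<Longrightarrow> x = scale (xiv x) J"
proof -
  assume "x \<in> U 0"
  then have "x \<in> span {J}" by (simp add: U_span PP0)
  then obtain k where "x = scale k J" by (auto simp: span_singleton)
  then show ?thesis by (simp add: xi_scale xi_J)
qed

lemma D_UI: "1 \<le> j \<Longrightarrow> x \<in> UI m \<Longrightarrow> D (int j + 2) x \<in> UI (m - int j)"
proof -
  assume j: "1 \<le> j" and x: "x \<in> UI m"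
  show ?thesis
  proof (rule lin_map_UI[OF lin_D x])
    fix l assume l: "is_partition l" "int (sum_list l) \<le> m"
    have "D (int j + 2) (vb l) \<in> UI (int (sum_list l) - int j)"
      using SB_D[OF l(1) _ j] symbol[OF l(1)] by blast
    then show "D (int j + 2) (vb l) \<in> UI (m - int j)" by (rule UI_mono) (use l in simp)
  qed
qed

lemma Dw_UI: "(\<forall>a\<in>set w. 1 \<le> a) \<Longrightarrow> x \<in> UI m \<Longrightarrow> Dw w x \<in> UI (m - int (sum_list w))"
proof (induction w arbitrary: x m)
  case Nil then show ?case by simp
next
  case (Cons j w)
  have "D (int j + 2) x \<in> UI (m - int j)" using D_UI Cons.prems by simp
  then have "Dw w (D (int j + 2) x) \<in> UI (m - int j - int (sum_list w))" using Cons by simp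
  then show ?case by (simp add: algebra_simps)
qed

lemma Dw_0: "Dw w 0 = 0" by (rule lin_0[OF lin_Dw])

lemma Dw_low: "(\<forall>a\<in>set w. 1 \<le> a) \<Longrightarrow> x \<in> U m \<Longrightarrow> m < sum_list w \<Longrightarrow> Dw w x = 0"
proof -
  assume w: "\<forall>a\<in>set w. 1 \<le> a" and x: "x \<in> U m" and lt: "m < sum_list w"
  have "Dw w x \<in> UI (int m - int (sum_list w))" using Dw_UI[OF w, of x "int m"] x by (simp add: UI_U)
  then show ?thesis by (rule UI_neg[rotated]) (use lt in simp)
qed

lemma F_add: "xiv (Dw w (x + y)) = xiv (Dw w x) + xiv (Dw w y)"
  by (simp add: lin_add[OF lin_Dw] xi_add)
lemma F_scale: "xiv (Dw w (scale a x)) = a * xiv (Dw w x)"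
  by (simp add: lin_scale[OF lin_Dw] xi_scale)
lemma F_diff: "xiv (Dw w (x - y)) = xiv (Dw w x) - xiv (Dw w y)"
  by (simp add: lin_diff[OF lin_Dw] xi_diff)
lemma F_sum: "xiv (Dw w (sum f A)) = (\<Sum>i\<in>A. xiv (Dw w (f i)))"
  by (simp add: lin_sum[OF lin_Dw] xi_sum)

lemma tri:
  "(\<forall>a\<in>set w. 1 \<le> a) \<Longrightarrow> is_partition l \<Longrightarrow> sum_list w = sum_list l \<Longrightarrow>
   (xiv (Dw w (vb l)) \<noteq> 0 \<longleftrightarrow> mset w = mset l)"
proof (induction w arbitrary: l)
  case Nil
  then have "l = []" using is_partition_sum0 by simp
  then show ?case by (simp add: xi_J)
next
  case (Cons j w)
  have j1: "1 \<le> j" and w1: "\<forall>a\<in>set w. 1 \<le> a" using Cons.prems by auto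
  let ?k = "of_nat (2*j) * l4 * of_nat (count (mset l) j)"
  define r where "r = D (int j + 2) (vb l) - scale ?k (vb (remove1 j l))"
  have r: "r \<in> UI (int (sum_list l) - int j - 1)"
    using symbol[OF Cons.prems(2)] j1 unfolding SB_def r_def by blast
  have "Dw w r \<in> UI (int (sum_list l) - int j - 1 - int (sum_list w))" by (rule Dw_UI[OF w1 r])
  then have r0: "Dw w r = 0" by (rule UI_neg[rotated]) (use Cons.prems(3) in simp)
  have e: "xiv (Dw (j # w) (vb l)) = ?k * xiv (Dw w (vb (remove1 j l)))"
  proof -
    have "D (int j + 2) (vb l) = scale ?k (vb (remove1 j l)) + r" by (simp add: r_def)
    then have "Dw (j # w) (vb l) = scale ?k (Dw w (vb (remove1 j l))) + Dw w r"
      by (simp add: lin_add[OF lin_Dw] lin_scale[OF lin_Dw])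
    then show ?thesis by (simp add: r0 xi_add xi_scale xi_0)
  qed
  show ?case
  proof (cases "j \<in> set l")
    case True
    have k: "?k \<noteq> 0" using True j1 l4nz by (simp add: count_mset_gt_0[of j l, simplified] del: count_mset)
    have pr: "is_partition (remove1 j l)" by (rule remove1_partition[OF Cons.prems(2)])
    have sr: "sum_list w = sum_list (remove1 j l)"
      using sum_remove1[OF True] Cons.prems(3) by simp
    have IH: "xiv (Dw w (vb (remove1 j l))) \<noteq> 0 \<longleftrightarrow> mset w = mset (remove1 j l)"
      by (rule Cons.IH[OF w1 pr sr])
    have "mset (j # w) = mset l \<longleftrightarrow> mset w = mset (remove1 j l)"
    proof
      assume "mset (j # w) = mset l"
      then show "mset w = mset (remove1 j l)" by (metis add_mset_remove_trivial mset.simps(2) mset_remove1)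
    next
      assume "mset w = mset (remove1 j l)"
      then show "mset (j # w) = mset l" using True by (simp add: insert_DiffM)
    qed
    then show ?thesis using e k IH by simp
  next
    case False
    then have "count (mset l) j = 0" by simp
    then have "?k = 0" by simp
    moreover have "mset (j # w) \<noteq> mset l" using False by (metis list.set_intros(1) set_mset_mset)
    ultimately show ?thesis using e by simp
  qed
qed

definition QQ :: "nat \<Rightarrow> nat list set" where "QQ m = {l. is_partition l \<and> sum_list l = m}"

lemma finite_PP: "finite (PP m)" using finite_partitions by (simp add: PP_def)
lemma finite_QQ: "finite (QQ m)" by (rule finite_subset[OF _ finite_PP[of m]]) (auto simp: QQ_def PP_def)

lemma decomp:
  assumes x: "x \<in> U (Suc m)"
  shows "\<exists>x0 a. x0 \<in> U m \<and> x = x0 + (\<Sum>l\<in>QQ (Suc m). scale (a l) (vb l))"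
proof -
  have "x \<in> span (vb ` PP (Suc m))" using x by (simp add: U_span)
  then obtain u where u: "x = (\<Sum>v\<in>vb ` PP (Suc m). scale (u v) v)"
    using span_finite[OF finite_imageI[OF finite_PP]] by auto
  have inj: "inj_on vb (PP (Suc m))" by (rule inj_on_subset[OF inj_vb]) (auto simp: PP_def)
  have "x = (\<Sum>l\<in>PP (Suc m). scale (u (vb l)) (vb l))"
    using u by (simp add: sum.reindex[OF inj])
  also have "PP (Suc m) = PP m \<union> QQ (Suc m)" by (auto simp: PP_def QQ_def)
  also have "(\<Sum>l\<in>PP m \<union> QQ (Suc m). scale (u (vb l)) (vb l)) =
     (\<Sum>l\<in>PP m. scale (u (vb l)) (vb l)) + (\<Sum>l\<in>QQ (Suc m). scale (u (vb l)) (vb l))"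
    by (rule sum.union_disjoint) (use finite_PP finite_QQ in \<open>auto simp: PP_def QQ_def\<close>)
  finally have "x = (\<Sum>l\<in>PP m. scale (u (vb l)) (vb l)) + (\<Sum>l\<in>QQ (Suc m). scale (u (vb l)) (vb l))" .
  moreover have "(\<Sum>l\<in>PP m. scale (u (vb l)) (vb l)) \<in> U m"
    by (rule U_sum) (auto simp: PP_def intro!: U_scale vb_U)
  ultimately show ?thesis by (intro exI[of _ "\<Sum>l\<in>PP m. scale (u (vb l)) (vb l)"] exI[of _ "\<lambda>l. u (vb l)"]) simp
qed

lemma kappa_nz: "l \<in> QQ m \<Longrightarrow> xiv (Dw l (vb l)) \<noteq> 0"
proof -
  assume "l \<in> QQ m"
  then have p: "is_partition l" by (simp add: QQ_def)
  have pos: "\<forall>a\<in>set l. 1 \<le> a" using is_partition_pos p by blast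
  show ?thesis using tri[OF pos p] by simp
qed

lemma F_QQ:
  assumes r: "\<rho> \<in> QQ m"
  shows "xiv (Dw \<rho> (\<Sum>l\<in>QQ m. scale (a l) (vb l))) = a \<rho> * xiv (Dw \<rho> (vb \<rho>))"
proof -
  have pos: "\<forall>x\<in>set \<rho>. 1 \<le> x" using r by (auto simp: QQ_def dest: is_partition_pos)
  have z: "xiv (Dw \<rho> (vb l)) = 0" if "l \<in> QQ m" "l \<noteq> \<rho>" for l
  proof -
    have "mset \<rho> \<noteq> mset l" using that r is_partition_eq by (auto simp: QQ_def)
    then show ?thesis using tri[OF pos, of l] that r by (auto simp: QQ_def)
  qed
  have "xiv (Dw \<rho> (\<Sum>l\<in>QQ m. scale (a l) (vb l))) = (\<Sum>l\<in>QQ m. a l * xiv (Dw \<rho> (vb l)))"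
    by (simp add: F_sum F_scale)
  also have "\<dots> = a \<rho> * xiv (Dw \<rho> (vb \<rho>)) + (\<Sum>l\<in>QQ m - {\<rho>}. a l * xiv (Dw \<rho> (vb l)))"
    by (rule sum.remove[OF finite_QQ r])
  also have "(\<Sum>l\<in>QQ m - {\<rho>}. a l * xiv (Dw \<rho> (vb l))) = 0"
    by (rule sum.neutral) (use z in auto)
  finally show ?thesis by simp
qed

end

context WH begin

lemma inj_dual:
  "x \<in> U m \<Longrightarrow> (\<And>\<rho>. is_partition \<rho> \<Longrightarrow> sum_list \<rho> \<le> m \<Longrightarrow> xiv (Dw \<rho> x) = 0) \<Longrightarrow> x = 0"
proof (induction m arbitrary: x)
  case 0
  have "xiv (Dw [] x) = 0" by (rule 0(2)) simp_all
  then show ?case using U0[OF 0(1)] by simp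
next
  case (Suc m)
  obtain x0 a where x0: "x0 \<in> U m" and x: "x = x0 + (\<Sum>l\<in>QQ (Suc m). scale (a l) (vb l))"
    using decomp[OF Suc.prems(1)] by blast
  have a0: "a \<rho> = 0" if r: "\<rho> \<in> QQ (Suc m)" for \<rho>
  proof -
    have p: "is_partition \<rho>" "sum_list \<rho> = Suc m" using r by (auto simp: QQ_def)
    have pos: "\<forall>x\<in>set \<rho>. 1 \<le> x" using is_partition_pos p by blast
    have "Dw \<rho> x0 = 0" by (rule Dw_low[OF pos x0]) (use p in simp)
    then have "xiv (Dw \<rho> x) = a \<rho> * xiv (Dw \<rho> (vb \<rho>))"
      unfolding x F_add F_QQ[OF r] by (simp add: xi_0)
    moreover have "xiv (Dw \<rho> x) = 0" by (rule Suc.prems(2)) (use p in simp_all)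
    ultimately show ?thesis using kappa_nz[OF r] by simp
  qed
  then have "x = x0" unfolding x by simp
  then show ?case
    using Suc.IH[OF x0] Suc.prems(2) by simp
qed

lemma surj_dual: "\<exists>x\<in>U m. \<forall>\<rho>. is_partition \<rho> \<longrightarrow> sum_list \<rho> \<le> m \<longrightarrow> xiv (Dw \<rho> x) = cc \<rho>"
proof (induction m arbitrary: cc)
  case 0
  have "\<forall>\<rho>. is_partition \<rho> \<longrightarrow> sum_list \<rho> \<le> 0 \<longrightarrow> xiv (Dw \<rho> (scale (cc []) J)) = cc \<rho>"
    by (auto simp: xi_scale xi_J dest: is_partition_sum0)
  moreover have "scale (cc []) J \<in> U 0" by (simp add: U_scale)
  ultimately show ?case by blast
next
  case (Suc m)
  define t where "t = (\<Sum>l\<in>QQ (Suc m). scale (cc l / xiv (Dw l (vb l))) (vb l))"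
  have tU: "t \<in> U (Suc m)" unfolding t_def
    by (rule U_sum) (auto simp: QQ_def intro!: U_scale vb_U)
  obtain x' where x': "x' \<in> U m"
    and hx': "\<forall>\<rho>. is_partition \<rho> \<longrightarrow> sum_list \<rho> \<le> m \<longrightarrow> xiv (Dw \<rho> x') = cc \<rho> - xiv (Dw \<rho> t)"
    using Suc.IH[of "\<lambda>\<rho>. cc \<rho> - xiv (Dw \<rho> t)"] by blast
  have "t + x' \<in> U (Suc m)" using tU U_monoD[OF x', of "Suc m"] by (simp add: U_add)
  moreover have "xiv (Dw \<rho> (t + x')) = cc \<rho>" if p: "is_partition \<rho>" "sum_list \<rho> \<le> Suc m" for \<rho>
  proof (cases "sum_list \<rho> \<le> m")
    case True then show ?thesis using hx' p by (simp add: F_add)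
  next
    case False
    then have r: "\<rho> \<in> QQ (Suc m)" using p by (simp add: QQ_def)
    have pos: "\<forall>x\<in>set \<rho>. 1 \<le> x" using is_partition_pos p by blast
    have "Dw \<rho> x' = 0" by (rule Dw_low[OF pos x']) (use False in simp)
    then have "xiv (Dw \<rho> (t + x')) = xiv (Dw \<rho> t)" by (simp add: F_add xi_0)
    also have "\<dots> = cc \<rho>" unfolding t_def F_QQ[OF r] using kappa_nz[OF r] by simp
    finally show ?thesis .
  qed
  ultimately show ?case by blast
qed

lemma straighten:
  fixes \<psi> :: "nat list \<Rightarrow> complex" and \<gamma> :: "nat \<Rightarrow> nat \<Rightarrow> complex"
  assumes H1: "\<And>\<rho>. is_partition \<rho> \<Longrightarrow> sum_list \<rho> \<le> M \<Longrightarrow> \<psi> \<rho> = 0"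
    and H3: "\<And>w. \<forall>x\<in>set w. 1 \<le> x \<Longrightarrow> M < sum_list w \<Longrightarrow> \<psi> w = 0"
    and H2: "\<And>u a b z. \<forall>x\<in>set (u @ a # b # z). 1 \<le> x \<Longrightarrow>
               \<psi> (u @ a # b # z) = \<psi> (u @ b # a # z) + \<gamma> a b * \<psi> (u @ (a + b + 2) # z)"
  shows "\<forall>x\<in>set w. 1 \<le> x \<Longrightarrow> \<psi> w = 0"
proof -
  have "\<forall>w. (\<forall>x\<in>set w. 1 \<le> x) \<longrightarrow> M < sum_list w + n \<longrightarrow> \<psi> w = 0" for n
  proof (induction n)
    case 0 then show ?case using H3 by simp
  next
    case (Suc n)
    show ?case
    proof (intro allI impI)
      fix w assume pos: "\<forall>x\<in>set w. 1 \<le> x" and lt: "M < sum_list w + Suc n"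
      show "\<psi> w = 0"
      proof (cases "M < sum_list w + n")
        case True then show ?thesis using Suc.IH pos by blast
      next
        case False
        define g where "g w' = (if (\<forall>x\<in>set w'. 1 \<le> x) \<and> sum_list w' = sum_list w then \<psi> w' else 0)" for w'
        have sw: "g (u @ a # b # z) = g (u @ b # a # z)" for u a b z
        proof (cases "(\<forall>x\<in>set (u @ a # b # z). 1 \<le> x) \<and> sum_list (u @ a # b # z) = sum_list w")
          case True
          have "\<psi> (u @ (a + b + 2) # z) = 0"
            using Suc.IH True False lt by auto
          then show ?thesis using H2[of u a b z] True by (auto simp: g_def)
        next
          case False then show ?thesis by (auto simp: g_def)
        qed
        have "g ([] @ w) = g ([] @ canon w)" by (rule swap_canon[where g = g, OF sw])
        moreover have "is_partition (canon w)" "sum_list (canon w) = sum_list w"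
          using canon_props[OF pos] by auto
        moreover have "\<forall>x\<in>set (canon w). 1 \<le> x" using is_partition_pos calculation(2) by blast
        ultimately have "g w = \<psi> (canon w)" by (simp add: g_def)
        also have "\<dots> = 0" using H1 \<open>is_partition (canon w)\<close> \<open>sum_list (canon w) = sum_list w\<close> False lt by simp
        finally show ?thesis using pos by (simp add: g_def)
      qed
    qed
  qed
  then show "\<forall>x\<in>set w. 1 \<le> x \<Longrightarrow> \<psi> w = 0" by (metis add.commute less_add_Suc1 add_Suc_right)
qed

definition good :: "'v \<Rightarrow> bool" where
  "good x \<longleftrightarrow> (\<forall>j. 1 \<le> j \<longrightarrow> j \<noteq> 3 \<longrightarrow> D (int j + 2) x = 0)"

lemma opswap:
  assumes "1 \<le> a" "1 \<le> b"
  shows "Dw (u @ a # b # z) X = Dw (u @ b # a # z) X + scale (of_int (int b - int a)) (Dw (u @ (a + b + 2) # z) X)"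
proof -
  let ?Y = "Dw u X"
  have "D (int b + 2) (D (int a + 2) ?Y) = D (int a + 2) (D (int b + 2) ?Y) +
          scale (of_int (int b - int a)) (D (int (a + b + 2) + 2) ?Y)"
  proof -
    have c: "L (int b + 2) (L (int a + 2) ?Y) = L (int a + 2) (L (int b + 2) ?Y) +
        scale (of_int (int b - int a)) (L (int b + 2 + (int a + 2)) ?Y)"
      using comm[of "int b + 2" "int a + 2" ?Y] by simp
    have e: "int b + 2 + (int a + 2) = int (a + b + 2) + 2" by simp
    have ch: "chi (int (a + b + 2) + 2) = 0" using assms by (simp add: chi_def)
    show ?thesis
      unfolding D_def lin_diff[OF lin_L] lin_scale[OF lin_L] c e ch
      by (simp add: algebra_simps)
  qed
  then show ?thesis
    by (simp add: Dw_append lin_add[OF lin_Dw] lin_scale[OF lin_Dw])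
qed

lemma good_J: "good J"
  unfolding good_def
proof (intro allI impI)
  fix j :: nat assume "1 \<le> j" "j \<noteq> 3"
  then have "j = 1 \<or> j = 2 \<or> j \<ge> 4" by linarith
  then show "D (int j + 2) J = 0" by (auto simp: D_def chi_def LJ3 LJ4 LJ5)
qed

lemma exist_step:
  assumes y: "y \<in> U m" and gy: "good y"
  shows "\<exists>x\<in>U (m + 3). good x \<and> L 5 x = y"
proof -
  define \<phi> where "\<phi> w = (case w of [] \<Rightarrow> 0 | j # w' \<Rightarrow> if j = 3 then xiv (Dw w' y) else 0)" for w
  obtain x where x: "x \<in> U (m + 3)"
    and hx: "\<forall>\<rho>. is_partition \<rho> \<longrightarrow> sum_list \<rho> \<le> m + 3 \<longrightarrow> xiv (Dw \<rho> x) = \<phi> \<rho>"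
    using surj_dual[of "m + 3" \<phi>] by blast
  define \<psi> where "\<psi> w = xiv (Dw w x) - \<phi> w" for w
  have Dy0: "D (int b + 2) y = 0" if "1 \<le> b" "b \<noteq> 3" for b using gy that by (simp add: good_def)
  have phi_swap: "\<phi> (u @ a # b # z) = \<phi> (u @ b # a # z) + of_int (int b - int a) * \<phi> (u @ (a + b + 2) # z)"
    if pos: "\<forall>x\<in>set (u @ a # b # z). 1 \<le> x" for u z :: "nat list" and a b :: nat
  proof (cases u)
    case Nil
    have ab: "1 \<le> a" "1 \<le> b" using pos by auto
    have n3: "\<phi> ((a + b + 2) # z) = 0" using ab by (simp add: \<phi>_def)
    show ?thesis
    proof (cases "a = 3")
      case True
      show ?thesis
      proof (cases "b = 3")
        case True then show ?thesis using \<open>a = 3\<close> Nil n3 by simp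
      next
        case False
        have "\<phi> (a # b # z) = 0" using True Dy0[OF ab(2) False] by (simp add: \<phi>_def Dw_0 xi_0)
        then show ?thesis using Nil n3 False by (simp add: \<phi>_def)
      qed
    next
      case False
      show ?thesis
      proof (cases "b = 3")
        case True
        have "\<phi> (b # a # z) = 0" using True Dy0[OF ab(1) False] by (simp add: \<phi>_def Dw_0 xi_0)
        then show ?thesis using Nil n3 False by (simp add: \<phi>_def)
      next
        case False then show ?thesis using Nil n3 \<open>a \<noteq> 3\<close> by (simp add: \<phi>_def)
      qed
    qed
  next
    case (Cons j u')
    have ab: "1 \<le> a" "1 \<le> b" using pos by auto
    show ?thesis
    proof (cases "j = 3")
      case True
      have "Dw (u' @ a # b # z) y = Dw (u' @ b # a # z) y + scale (of_int (int b - int a)) (Dw (u' @ (a + b + 2) # z) y)"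
        by (rule opswap[OF ab])
      then show ?thesis using Cons True by (simp add: \<phi>_def xi_add xi_scale)
    next
      case False then show ?thesis using Cons by (simp add: \<phi>_def)
    qed
  qed
  have psi0: "\<psi> w = 0" if "\<forall>x\<in>set w. 1 \<le> x" for w
  proof (rule straighten[where \<psi> = \<psi> and M = "m + 3" and \<gamma> = "\<lambda>a b. of_int (int b - int a)", OF _ _ _ that])
    fix \<rho> :: "nat list" assume "is_partition \<rho>" "sum_list \<rho> \<le> m + 3"
    then show "\<psi> \<rho> = 0" using hx by (simp add: \<psi>_def)
  next
    fix w :: "nat list" assume pos: "\<forall>x\<in>set w. 1 \<le> x" and lt: "m + 3 < sum_list w"
    have "Dw w x = 0" by (rule Dw_low[OF pos x lt])
    moreover have "\<phi> w = 0"
    proof (cases w)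
      case Nil then show ?thesis by (simp add: \<phi>_def)
    next
      case (Cons j w')
      have "Dw w' y = 0" if "j = 3"
        by (rule Dw_low[OF _ y]) (use pos Cons lt that in auto)
      then show ?thesis using Cons by (simp add: \<phi>_def xi_0)
    qed
    ultimately show "\<psi> w = 0" by (simp add: \<psi>_def xi_0)
  next
    fix u z :: "nat list" and a b :: nat assume pos: "\<forall>x\<in>set (u @ a # b # z). 1 \<le> x"
    have ab: "1 \<le> a" "1 \<le> b" using pos by auto
    show "\<psi> (u @ a # b # z) = \<psi> (u @ b # a # z) + of_int (int b - int a) * \<psi> (u @ (a + b + 2) # z)"
    proof -
      have e: "xiv (Dw (u @ a # b # z) x) = xiv (Dw (u @ b # a # z) x) + of_int (int b - int a) * xiv (Dw (u @ (a + b + 2) # z) x)"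
        unfolding opswap[OF ab, of u z x] xi_add xi_scale ..
      show ?thesis unfolding \<psi>_def e phi_swap[OF pos] by (simp add: algebra_simps)
    qed
  qed
  have gx: "good x"
    unfolding good_def
  proof (intro allI impI)
    fix j :: nat assume j1: "1 \<le> j" and j3: "j \<noteq> 3"
    have xI: "x \<in> UI (int (m + 3))" using x by (simp only: UI_U)
    have X: "D (int j + 2) x \<in> UI (int (m + 3) - int j)" by (rule D_UI[OF j1 xI])
    show "D (int j + 2) x = 0"
    proof (cases "m + 3 < j")
      case True then show ?thesis using X by (intro UI_neg[rotated]) auto
    next
      case False
      then have "int (m + 3) - int j = int (m + 3 - j)" by simp
      then have XU: "D (int j + 2) x \<in> U (m + 3 - j)" using X by (simp only: UI_U)
      show ?thesis
      proof (rule inj_dual[OF XU])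
        fix \<rho> assume p: "is_partition \<rho>" "sum_list \<rho> \<le> m + 3 - j"
        have pos: "\<forall>x\<in>set (j # \<rho>). 1 \<le> x" using is_partition_pos p j1 by auto
        have "xiv (Dw (j # \<rho>) x) = \<phi> (j # \<rho>)" using psi0[OF pos] by (simp add: \<psi>_def)
        then show "xiv (Dw \<rho> (D (int j + 2) x)) = 0" using j3 by (simp add: \<phi>_def)
      qed
    qed
  qed
  have L5x: "L 5 x = y"
  proof -
    have e5: "L 5 x = D (int 3 + 2) x" by (simp add: D_def chi_def)
    have xI: "x \<in> UI (int (m + 3))" using x by (simp only: UI_U)
    have "D (int 3 + 2) x \<in> UI (int (m + 3) - int 3)" by (rule D_UI[OF _ xI]) simp
    then have "L 5 x \<in> U m" unfolding e5 by (simp add: UI_U[symmetric])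
    then have Z: "L 5 x - y \<in> U m" using y by (rule U_diff)
    show ?thesis
    proof -
      have "L 5 x - y = 0"
      proof (rule inj_dual[OF Z])
        fix \<rho> assume p: "is_partition \<rho>" "sum_list \<rho> \<le> m"
        have pos: "\<forall>x\<in>set (3 # \<rho>). 1 \<le> x" using is_partition_pos p by auto
        have "xiv (Dw (3 # \<rho>) x) = \<phi> (3 # \<rho>)" using psi0[OF pos] by (simp add: \<psi>_def)
        then show "xiv (Dw \<rho> (L 5 x - y)) = 0" unfolding F_diff e5 by (simp add: \<phi>_def)
      qed
      then show ?thesis by simp
    qed
  qed
  show ?thesis using x gx L5x by blast
qed

end

context WH begin

lemma all_in_U: "\<exists>m. x \<in> U m"
proof -
  have "x \<in> span (vb ` {l. is_partition l})" by (rule in_span_all)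
  then show ?thesis
  proof (induction rule: span_induct_alt)
    case base then show ?case by auto
  next
    case (step a b y)
    then obtain l where l: "is_partition l" "b = vb l" by auto
    obtain m where m: "y \<in> U m" using step by auto
    have "b \<in> U (max m (sum_list l))" using l vb_U by simp
    moreover have "y \<in> U (max m (sum_list l))" using m U_monoD by simp
    ultimately show ?case by (blast intro: U_add U_scale)
  qed
qed

lemma good_lin: "good x \<Longrightarrow> good y \<Longrightarrow> good (x - scale a y)"
  by (simp add: good_def lin_diff[OF lin_D] lin_scale[OF lin_D])

lemma kernel: "good z \<Longrightarrow> L 5 z = 0 \<Longrightarrow> xiv z = 0 \<Longrightarrow> z = 0"
proof -
  assume g: "good z" and l5: "L 5 z = 0" and x0: "xiv z = 0"
  obtain m where zU: "z \<in> U m" using all_in_U by blast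
  have D0: "D (int j + 2) z = 0" if "1 \<le> j" for j
  proof (cases "j = 3")
    case True then show ?thesis using l5 by (simp add: D_def chi_def)
  next
    case False then show ?thesis using g that by (simp add: good_def)
  qed
  show ?thesis
  proof (rule inj_dual[OF zU])
    fix \<rho> assume p: "is_partition \<rho>" "sum_list \<rho> \<le> m"
    show "xiv (Dw \<rho> z) = 0"
    proof (cases \<rho>)
      case Nil then show ?thesis using x0 by simp
    next
      case (Cons j \<rho>')
      have "1 \<le> j" using p Cons by (simp add: is_partition_Cons)
      then show ?thesis using Cons D0 by (simp add: Dw_0 xi_0)
    qed
  qed
qed

lemma exist_gauge: "y \<in> U m \<Longrightarrow> good y \<Longrightarrow> \<exists>x. x \<in> U (m + 3) \<and> good x \<and> L 5 x = y \<and> xiv x = 0"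
proof -
  assume y: "y \<in> U m" and g: "good y"
  obtain x where x: "x \<in> U (m + 3)" "good x" "L 5 x = y" using exist_step[OF y g] by blast
  let ?x = "x - scale (xiv x) J"
  have "?x \<in> U (m + 3)" using x by (simp add: U_diff U_scale)
  moreover have "good ?x" by (rule good_lin[OF x(2) good_J])
  moreover have "L 5 ?x = y" using x LJ5[of 5] by (simp add: lin_diff[OF lin_L] lin_scale[OF lin_L])
  moreover have "xiv ?x = 0" by (simp add: xi_diff xi_scale xi_J)
  ultimately show ?thesis by blast
qed

primrec Ps :: "nat \<Rightarrow> 'v" where
  "Ps 0 = J"
| "Ps (Suc k) = (SOME x. x \<in> U (3 * k + 3) \<and> good x \<and> L 5 x = Ps k \<and> xiv x = 0)"

lemma Ps_props: "Ps k \<in> U (3 * k) \<and> good (Ps k) \<and> xiv (Ps k) = (if k = 0 then 1 else 0) \<and> L 5 (Ps (Suc k)) = Ps k"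
proof (induction k)
  case 0
  have "\<exists>x. x \<in> U (0 + 3) \<and> good x \<and> L 5 x = J \<and> xiv x = 0" by (rule exist_gauge) (simp_all add: good_J)
  then have "L 5 (Ps (Suc 0)) = Ps 0" by simp (rule someI2_ex, auto)
  then show ?case by (simp add: good_J xi_J)
next
  case (Suc k)
  have ex: "\<exists>x. x \<in> U (3 * k + 3) \<and> good x \<and> L 5 x = Ps k \<and> xiv x = 0"
    using exist_gauge[of "Ps k" "3 * k"] Suc.IH by simp
  have P: "Ps (Suc k) \<in> U (3 * k + 3) \<and> good (Ps (Suc k)) \<and> L 5 (Ps (Suc k)) = Ps k \<and> xiv (Ps (Suc k)) = 0"
    unfolding Ps.simps by (rule someI_ex[OF ex])
  have Pu: "Ps (Suc k) \<in> U (3 * Suc k)" using P by (simp add: algebra_simps)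
  have ex2: "\<exists>x. x \<in> U (3 * Suc k + 3) \<and> good x \<and> L 5 x = Ps (Suc k) \<and> xiv x = 0"
    using exist_gauge[OF Pu] P by blast
  have "L 5 (Ps (Suc (Suc k))) = Ps (Suc k)"
    unfolding Ps.simps(2)[of "Suc k"] using someI_ex[OF ex2] by blast
  then show ?case using P Pu by (simp del: Ps.simps)
qed

lemma sol_good: "psi_solution scale L J l3 l4 Psi \<Longrightarrow> good (Psi k)"
  unfolding good_def
proof (intro allI impI)
  fix j :: nat assume s: "psi_solution scale L J l3 l4 Psi" and j1: "1 \<le> j" and j3: "j \<noteq> 3"
  have "j = 1 \<or> j = 2 \<or> j \<ge> 4" using j1 j3 by linarith
  then show "D (int j + 2) (Psi k) = 0"
  proof (elim disjE)
    assume "j = 1" then show ?thesis using s by (simp add: psi_solution_def D_def chi_def)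
  next
    assume "j = 2" then show ?thesis using s by (simp add: psi_solution_def D_def chi_def)
  next
    assume j4: "j \<ge> 4"
    have "L (int j + 2) (Psi k) = 0" using s j4 unfolding psi_solution_def by simp
    then show ?thesis using j4 by (simp add: D_def chi_def)
  qed
qed

lemma Ps_sol: "psi_solution scale L J l3 l4 Ps"
proof -
  have g: "good (Ps k)" for k using Ps_props by blast
  have "L 3 (Ps k) = scale l3 (Ps k)" for k
    using g[of k] unfolding good_def by (auto dest!: spec[of _ 1] simp: D_def chi_def)
  moreover have "L 4 (Ps k) = scale l4 (Ps k)" for k
    using g[of k] unfolding good_def by (auto dest!: spec[of _ 2] simp: D_def chi_def)
  moreover have "L n (Ps k) = 0" if "n > 5" for n k
  proof -
    have h: "\<forall>j. 1 \<le> j \<longrightarrow> j \<noteq> 3 \<longrightarrow> D (int j + 2) (Ps k) = 0" using g[of k] unfolding good_def by blast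
    have "D (int (nat (n - 2)) + 2) (Ps k) = 0" using h[rule_format, of "nat (n - 2)"] that by simp
    moreover have "int (nat (n - 2)) + 2 = n" using that by simp
    ultimately show ?thesis using that by (simp add: D_def chi_def)
  qed
  moreover have "L 5 (Ps 0) = 0" using LJ5[of 5] by simp
  moreover have "L 5 (Ps (Suc k)) = Ps k" for k using Ps_props by blast
  ultimately show ?thesis unfolding psi_solution_def by simp
qed

lemma unique_sol:
  assumes s1: "psi_solution scale L J l3 l4 P1" and g1: "\<forall>k. xiv (P1 k) = (if k = 0 then 1 else 0)"
    and s2: "psi_solution scale L J l3 l4 P2" and g2: "\<forall>k. xiv (P2 k) = (if k = 0 then 1 else 0)"
  shows "P1 k = P2 k"
proof (induction k)
  case 0 then show ?case using s1 s2 by (simp add: psi_solution_def)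
next
  case (Suc k)
  let ?d = "P1 (Suc k) - P2 (Suc k)"
  have "good (P1 (Suc k))" "good (P2 (Suc k))" using sol_good s1 s2 by blast+
  from good_lin[OF this, of 1] have "good ?d" by simp
  moreover have "L 5 ?d = 0" using s1 s2 Suc by (simp add: psi_solution_def lin_diff[OF lin_L])
  moreover have "xiv ?d = 0" using g1 g2 by (simp add: xi_diff)
  ultimately have "?d = 0" by (rule kernel)
  then show ?case by simp
qed

end

theorem theoremA1:
  fixes scale :: "complex \<Rightarrow> 'v \<Rightarrow> 'v::ab_group_add"
    and L :: "int \<Rightarrow> 'v \<Rightarrow> 'v" and J :: 'v
    and c l2 l3 l4 :: complex
  assumes "whittaker2 scale L c J l2 l3 l4"
    and "l4 \<noteq> 0"
  shows "(\<exists>Psi. psi_solution scale L J l3 l4 Psi)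
       \<and> (\<exists>Psi. psi_solution scale L J l3 l4 Psi \<and> (\<forall>k. Psi k \<in> Ufilt scale L J (3 * k)))
       \<and> (\<exists>!Psi. psi_solution scale L J l3 l4 Psi \<and>
                 (\<forall>k. xi scale L J (Psi k) = (if k = 0 then 1 else 0)))
       \<and> (\<forall>Psi. psi_solution scale L J l3 l4 Psi \<and>
                 (\<forall>k. xi scale L J (Psi k) = (if k = 0 then 1 else 0))
               \<longrightarrow> (\<forall>k. Psi k \<in> Ufilt scale L J (3 * k)))"
proof -
  interpret W: WH scale L c J l2 l3 l4 using assms by unfold_locales
  have sol: "psi_solution scale L J l3 l4 W.Ps" by (rule W.Ps_sol)
  have inU: "\<forall>k. W.Ps k \<in> Ufilt scale L J (3 * k)"
    using W.Ps_props by (simp add: W.U_def)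
  have ga: "\<forall>k. xi scale L J (W.Ps k) = (if k = 0 then 1 else 0)" using W.Ps_props by blast
  have uniq: "P = W.Ps"
    if "psi_solution scale L J l3 l4 P" "\<forall>k. xi scale L J (P k) = (if k = 0 then 1 else 0)" for P
    using W.unique_sol[OF that sol ga] by blast
  show ?thesis
  proof (intro conjI)
    show "\<exists>Psi. psi_solution scale L J l3 l4 Psi" using sol by blast
    show "\<exists>Psi. psi_solution scale L J l3 l4 Psi \<and> (\<forall>k. Psi k \<in> Ufilt scale L J (3 * k))"
      using sol inU by blast
    show "\<exists>!Psi. psi_solution scale L J l3 l4 Psi \<and> (\<forall>k. xi scale L J (Psi k) = (if k = 0 then 1 else 0))"
      using sol ga uniq by blast
    show "\<forall>Psi. psi_solution scale L J l3 l4 Psi \<and> (\<forall>k. xi scale L J (Psi k) = (if k = 0 then 1 else 0))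
               \<longrightarrow> (\<forall>k. Psi k \<in> Ufilt scale L J (3 * k))"
      using uniq inU by blast
  qed
qed

end
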